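(* Let $m$ be a positive integer and let $e$ be an integer with $1\le e\le 3^m-2$. If the monomial $x^e$ is APN or planar over $\mathrm{GF}(3^m)$, then: $e$ is even; $\gcd(e,3^m-1)=2$; $\ell_e=|C_e|=m$; and $e\notin C_1$.
   Context: A function $f:\mathrm{GF}(q)\to\mathrm{GF}(q)$ is almost perfect nonlinear (APN) if $\max_{a\in\mathrm{GF}(q)^*}\max_{b\in\mathrm{GF}(q)}|\{x\in\mathrm{GF}(q): f(x+a)-f(x)=b\}|=2$, and planar (perfect nonlinear) if this maximum equals $1$. For $n=3^m-1$ and $j\in\mathbb{Z}_n$, $C_j=\{j,3j,\dots,3^{\ell_j-1}j\}$ (mod $n$) is the $3$-cyclotomic coset modulo $n$ containing $j$, where $\ell_j$ is the smallest positive integer with $3^{\ell_j}j\equiv j\pmod n$. *)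

theory Defs
  imports Main
begin

definition delta_count :: "('a::{field,finite} \<Rightarrow> 'a) \<Rightarrow> 'a \<Rightarrow> 'a \<Rightarrow> nat" where
  "delta_count f a b = card {x. f (x + a) - f x = b}"

definition diff_unif :: "('a::{field,finite} \<Rightarrow> 'a) \<Rightarrow> nat" where
  "diff_unif f = Max {delta_count f a b | a b. a \<noteq> 0}"

definition APN :: "('a::{field,finite} \<Rightarrow> 'a) \<Rightarrow> bool" where
  "APN f \<longleftrightarrow> diff_unif f = 2"

definition planar :: "('a::{field,finite} \<Rightarrow> 'a) \<Rightarrow> bool" where
  "planar f \<longleftrightarrow> diff_unif f = 1"

definition cyc_coset :: "nat \<Rightarrow> nat \<Rightarrow> nat set" where
  "cyc_coset n j = {(3 ^ i * j) mod n | i. True}"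

definition cyc_ell :: "nat \<Rightarrow> nat \<Rightarrow> nat" where
  "cyc_ell n j = (LEAST l. 0 < l \<and> (3 ^ l * j) mod n = j mod n)"

end

theory Submission
  imports Defs "HOL-Number_Theory.Number_Theory" "HOL-Computational_Algebra.Polynomial"
begin

lemma ff_fermat:
  fixes x :: "'a::{field,finite}"
  assumes "x \<noteq> 0"
  shows "x ^ (card (UNIV :: 'a set) - 1) = 1"
proof -
  let ?U = "UNIV - {0::'a}"
  have cU: "card ?U = card (UNIV :: 'a set) - 1" by (simp add: card_Diff_singleton)
  have "(\<Prod>y\<in>?U. x * y) = (\<Prod>y\<in>?U. y)"
    by (rule prod.reindex_bij_witness[of _ "\<lambda>y. y / x" "\<lambda>y. x * y"]) (use assms in auto)
  moreover have "(\<Prod>y\<in>?U. x * y) = x ^ card ?U * \<Prod>?U"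
    by (simp add: prod.distrib)
  moreover have "\<Prod>?U \<noteq> (0::'a)" by simp
  ultimately show ?thesis using cU by (metis mult_cancel_right2)
qed

lemma ff_char3:
  assumes "card (UNIV :: 'a::{field,finite} set) = 3 ^ m"
  shows "(3::'a) = 0"
proof -
  have pos: "CHAR('a) > 0" by (rule finite_imp_CHAR_pos) simp
  have pr: "prime CHAR('a)" using prime_CHAR_semidom[OF pos] .
  have "CHAR('a) dvd 3 ^ m" using CHAR_dvd_CARD[where 'a='a] assms by simp
  hence "CHAR('a) dvd 3" using pr prime_dvd_power by blast
  hence "CHAR('a) = 3" using pr by (simp add: primes_dvd_imp_eq)
  hence "(of_nat 3 :: 'a) = 0" by (metis of_nat_CHAR)
  thus ?thesis by simp
qed

lemma ff_roots:
  fixes d :: nat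
  assumes d: "d > 0" "d dvd card (UNIV :: 'a::{field,finite} set) - 1"
  shows "d \<le> card {y::'a. y ^ d = 1}"
proof -
  let ?q = "card (UNIV :: 'a set)"
  let ?U = "UNIV - {0::'a}"
  let ?K = "{y::'a. y ^ d = 1}"
  define r where "r = (?q - 1) div d"
  have q2: "?q \<ge> 2"
  proof -
    have "{0::'a, 1} \<subseteq> UNIV" by simp
    hence "card {0::'a,1} \<le> ?q" by (rule card_mono[OF finite_UNIV])
    thus ?thesis by simp
  qed
  have qr: "?q - 1 = d * r" using d unfolding r_def by simp
  hence rpos: "r > 0" using q2 by (cases r) auto
  define \<phi> where "\<phi> = (\<lambda>y::'a. y ^ d)"
  let ?R = "{z::'a. poly (monom 1 r - 1) z = 0}"
  have img: "\<phi> ` ?U \<subseteq> ?R"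
  proof
    fix z assume "z \<in> \<phi> ` ?U"
    then obtain y where y: "y \<noteq> 0" "z = y ^ d" unfolding \<phi>_def by auto
    have "z ^ r = y ^ (d * r)" using y by (simp add: power_mult)
    also have "\<dots> = 1" using ff_fermat[OF y(1)] qr by simp
    finally show "z \<in> ?R" by (simp add: poly_monom)
  qed
  have "monom (1::'a) r - 1 \<noteq> 0"
  proof
    assume "monom (1::'a) r - 1 = 0"
    hence "coeff (monom (1::'a) r - 1) r = 0" by simp
    thus False using rpos by (simp add: coeff_monom)
  qed
  hence "card ?R \<le> degree (monom (1::'a) r - 1)" by (rule card_poly_roots_bound)
  also have "degree (monom (1::'a) r - 1) \<le> r"
    by (metis degree_diff_le degree_monom_le degree_1 le0)
  finally have cR: "card ?R \<le> r" .
  have cI: "card (\<phi> ` ?U) \<le> r"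
    using card_mono[OF finite_subset[OF subset_UNIV finite_UNIV] img] cR by linarith
  have fib: "card {x. x \<in> ?U \<and> \<phi> x = z} = card ?K" if "z \<in> \<phi> ` ?U" for z
  proof -
    from that obtain y0 where "y0 \<in> ?U" "z = \<phi> y0" by blast
    hence y0: "y0 \<noteq> 0" "z = y0 ^ d" unfolding \<phi>_def by auto
    show ?thesis
    proof (rule bij_betw_same_card[of "\<lambda>x. x / y0"], rule bij_betw_byWitness[of _ "\<lambda>k. k * y0"])
      show "\<forall>a\<in>{x. x \<in> ?U \<and> \<phi> x = z}. a / y0 * y0 = a" using y0 by auto
      show "\<forall>a'\<in>?K. a' * y0 / y0 = a'" using y0 by auto
      show "(\<lambda>x. x / y0) ` {x. x \<in> ?U \<and> \<phi> x = z} \<subseteq> ?K"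
        using y0 by (auto simp: \<phi>_def power_divide)
      show "(\<lambda>k. k * y0) ` ?K \<subseteq> {x. x \<in> ?U \<and> \<phi> x = z}"
      proof
        fix x assume "x \<in> (\<lambda>k. k * y0) ` ?K"
        then obtain k where k: "k ^ d = 1" "x = k * y0" by auto
        have "k \<noteq> 0" using k d by (metis power_0_left less_not_refl2 zero_neq_one)
        thus "x \<in> {x. x \<in> ?U \<and> \<phi> x = z}" using k y0 y0 by (auto simp: \<phi>_def power_mult_distrib)
      qed
    qed
  qed
  have "card ?U = (\<Sum>z\<in>\<phi> ` ?U. card {x. x \<in> ?U \<and> \<phi> x = z})"
    using sum.image_gen[of ?U "\<lambda>_. 1::nat" \<phi>] by simp
  also have "\<dots> = (\<Sum>z\<in>\<phi> ` ?U. card ?K)" using fib by (rule sum.cong[OF refl])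
  also have "\<dots> = card (\<phi> ` ?U) * card ?K" by simp
  also have "\<dots> \<le> r * card ?K" using cI by simp
  finally have "d * r \<le> r * card ?K" using qr by (simp add: card_Diff_singleton)
  thus ?thesis using rpos by (simp add: mult.commute)
qed

lemma ff_zero_count:
  fixes e :: nat
  shows "card {y::'a::{field,finite}. y ^ e = 1} - 1 \<le> card {x::'a. (x + 1) ^ e - x ^ e = 0}"
proof -
  let ?K = "{y::'a. y ^ e = 1}"
  let ?S = "{x::'a. (x + 1) ^ e - x ^ e = 0}"
  have inj: "inj_on (\<lambda>y. 1 / (y - 1)) (?K - {1})"
    by (rule inj_onI) (auto simp: field_simps)
  have sub: "(\<lambda>y. 1 / (y - 1)) ` (?K - {1}) \<subseteq> ?S"
  proof
    fix x assume "x \<in> (\<lambda>y. 1 / (y - 1)) ` (?K - {1})"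
    then obtain y where y: "y ^ e = 1" "y \<noteq> 1" "x = 1 / (y - 1)" by auto
    have ne: "y - 1 \<noteq> 0" using y by simp
    have "x + 1 = y / (y - 1)" using y ne by (simp add: field_simps)
    hence "(x + 1) ^ e = x ^ e" using y by (simp add: power_divide)
    thus "x \<in> ?S" by simp
  qed
  have "card (?K - {1}) = card ((\<lambda>y. 1 / (y - 1)) ` (?K - {1}))"
    using inj by (simp add: card_image)
  also have "\<dots> \<le> card ?S" by (rule card_mono[OF finite sub])
  finally have "card (?K - {1}) \<le> card ?S" .
  moreover have "card (?K - {1}) = card ?K - 1" by (simp add: card_Diff_singleton)
  ultimately show ?thesis by simp
qed

lemma nt_key:
  fixes m e l :: nat
  assumes g: "gcd e (3 ^ m - 1) = 2" and l: "0 < l" "l < m"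
  shows "\<not> (3 ^ m - 1) dvd e * (3 ^ l - 1)"
proof
  assume dv: "(3 ^ m - 1) dvd e * (3 ^ l - 1)"
  have d1: "2 dvd e" using g by (metis gcd_dvd1)
  have d2: "2 dvd (3::nat) ^ m - 1" using g by (metis gcd_dvd2)
  obtain e' :: nat where e': "e = 2 * e'" using d1 by (erule dvdE)
  obtain n' :: nat where n': "3 ^ m - 1 = 2 * n'" using d2 by (erule dvdE)
  have "gcd e' n' = 1" using g e' n' by (simp add: gcd_mult_distrib_nat[symmetric])
  hence cop: "coprime n' e'" by (metis coprime_iff_gcd_eq_1 gcd.commute)
  have "n' dvd e' * (3 ^ l - 1)" using dv e' n' by (simp add: mult.assoc)
  hence "n' dvd 3 ^ l - 1" using cop coprime_dvd_mult_right_iff by blast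
  moreover have "(3::nat) ^ l - 1 > 0" using one_less_power[of "3::nat" l] l by simp
  ultimately have "n' \<le> 3 ^ l - 1" by (simp add: dvd_imp_le)
  moreover have "(3::nat) ^ m \<ge> 3 * 3 ^ l"
  proof -
    have "m = Suc l + (m - Suc l)" using l by simp
    hence "(3::nat) ^ m = 3 ^ (Suc l + (m - Suc l))" by (rule arg_cong)
    also have "\<dots> = 3 ^ (Suc l) * 3 ^ (m - Suc l)" by (rule power_add)
    finally have "(3::nat) ^ m = 3 ^ (Suc l) * 3 ^ (m - Suc l)" .
    moreover have "(3::nat) ^ (m - Suc l) \<ge> 1" by simp
    ultimately show ?thesis by (metis mult.right_neutral mult_le_mono2 power_Suc)
  qed
  moreover have "(3::nat) ^ l \<ge> 1" by simp
  ultimately show False using n' by linarith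
qed

lemma nt_mod_iff:
  fixes n e l :: nat
  shows "(3 ^ l * e) mod n = e mod n \<longleftrightarrow> n dvd e * (3 ^ l - 1)"
proof -
  have "e \<le> 3 ^ l * e" by simp
  hence "(3 ^ l * e) mod n = e mod n \<longleftrightarrow> n dvd 3 ^ l * e - e" by (rule mod_eq_dvd_iff_nat)
  moreover have "3 ^ l * e - e = e * (3 ^ l - 1)" by (simp add: algebra_simps diff_mult_distrib)
  ultimately show ?thesis by simp
qed

theorem lemma2:
  fixes m e :: nat
  assumes card: "card (UNIV :: 'a set) = 3 ^ m"
    and m: "1 \<le> m"
    and e: "1 \<le> e" "e \<le> 3 ^ m - 2"
    and f: "APN (\<lambda>x::'a::{field,finite}. x ^ e) \<or> planar (\<lambda>x::'a. x ^ e)"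
  shows "even e \<and> gcd e (3 ^ m - 1) = 2 \<and> cyc_ell (3 ^ m - 1) e = m
         \<and> card (cyc_coset (3 ^ m - 1) e) = m \<and> e \<notin> cyc_coset (3 ^ m - 1) 1"
proof -
  let ?f = "\<lambda>x::'a. x ^ e"
  have bound: "delta_count ?f a b \<le> 2" if "a \<noteq> 0" for a b
  proof -
    have fin: "finite {delta_count ?f a b | a b. a \<noteq> 0}"
    proof (rule finite_subset[of _ "(\<lambda>(a,b). delta_count ?f a b) ` UNIV"])
      show "{delta_count ?f a b | a b. a \<noteq> 0} \<subseteq> (\<lambda>(a,b). delta_count ?f a b) ` UNIV" by auto
    qed simp
    have "delta_count ?f a b \<le> diff_unif ?f"
      unfolding diff_unif_def using that by (intro Max_ge[OF fin]) auto
    thus ?thesis using f unfolding APN_def planar_def by auto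
  qed
  have three: "(3::'a) = 0" using ff_char3[OF card] .
  have two: "(2::'a) = -1"
  proof -
    have "(2::'a) + 1 = 3" by simp
    hence "(2::'a) + 1 = 0" using three by simp
    thus ?thesis by (simp add: eq_neg_iff_add_eq_0)
  qed
  have ev: "even e"
  proof (rule ccontr)
    assume od: "odd e"
    have m1: "(-1::'a) ^ e = -1" using od by simp
    have s1: "((1::'a) + 1) ^ e - 1 ^ e = 1"
    proof -
      have "((1::'a) + 1) ^ e - 1 ^ e = 2 ^ e - 1" by simp
      also have "\<dots> = (-1) ^ e - 1" by (simp add: two)
      also have "\<dots> = -1 - 1" using m1 by simp
      also have "\<dots> = - 2" by simp
      also have "\<dots> = 1" by (simp add: two)
      finally show ?thesis .
    qed
    have s2: "((2::'a) + 1) ^ e - 2 ^ e = 1"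
    proof -
      have "(2::'a) + 1 = 0" by (simp add: two)
      hence "((2::'a) + 1) ^ e = 0" using e(1) by simp
      moreover have "(2::'a) ^ e = -1" using m1 by (simp add: two)
      ultimately show ?thesis by simp
    qed
    have s0: "((0::'a) + 1) ^ e - 0 ^ e = 1" using e(1) by simp
    have s: "{0, 1, 2} \<subseteq> {x::'a. (x + 1) ^ e - x ^ e = 1}" using s0 s1 s2 by auto
    have n20: "(2::'a) \<noteq> 0" by (simp add: two)
    have n21: "(2::'a) \<noteq> 1"
    proof
      assume h: "(2::'a) = 1"
      have "(3::'a) = 2 + 1" by simp
      also have "\<dots> = 1 + 1" using h by simp
      also have "\<dots> = 2" by simp
      finally have "(2::'a) = 0" using three by simp
      thus False using h by simp
    qed
    have "card {0::'a, 1, 2} = 3" using n20 n21 by simp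
    hence "3 \<le> card {x::'a. (x + 1) ^ e - x ^ e = 1}"
      using card_mono[OF finite s] by simp
    moreover have "delta_count ?f 1 1 \<le> 2" by (rule bound) simp
    ultimately show False unfolding delta_count_def by simp
  qed
  let ?n = "(3::nat) ^ m - 1"
  have n2: "?n \<ge> 2"
  proof -
    have "(3::nat) ^ m \<ge> 3 ^ 1" using m by (rule power_increasing) simp
    thus ?thesis by simp
  qed
  have neven: "even ?n" by simp
  have g: "gcd e ?n = 2"
  proof (rule ccontr)
    assume ne: "gcd e ?n \<noteq> 2"
    define g where "g = gcd e ?n"
    have "2 dvd g" using ev neven unfolding g_def by simp
    moreover have gpos: "g > 0" using e(1) unfolding g_def by simp
    ultimately have g4: "g \<ge> 4" using ne unfolding g_def[symmetric] by presburger
    have "g dvd card (UNIV::'a set) - 1" using card unfolding g_def by simp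
    hence "g \<le> card {y::'a. y ^ g = 1}" using ff_roots gpos by blast
    also have "\<dots> \<le> card {y::'a. y ^ e = 1}"
    proof (rule card_mono[OF finite])
      obtain k where k: "e = g * k" using gcd_dvd1[of e ?n] unfolding g_def dvd_def by blast
      show "{y::'a. y ^ g = 1} \<subseteq> {y. y ^ e = 1}"
      proof
        fix y :: 'a assume "y \<in> {y. y ^ g = 1}"
        thus "y \<in> {y. y ^ e = 1}" using k by (simp add: power_mult)
      qed
    qed
    finally have "3 \<le> card {x::'a. (x + 1) ^ e - x ^ e = 0}"
      using ff_zero_count[where 'a='a and e=e] g4 by linarith
    moreover have "delta_count ?f 1 0 \<le> 2" by (rule bound) simp
    ultimately show False unfolding delta_count_def by simp
  qed
  have key: "\<And>l. 0 < l \<Longrightarrow> l < m \<Longrightarrow> \<not> ?n dvd e * (3 ^ l - 1)" using nt_key[OF g] by blast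
  have ell: "cyc_ell ?n e = m"
    unfolding cyc_ell_def
  proof (rule Least_equality)
    show "0 < m \<and> (3 ^ m * e) mod ?n = e mod ?n" using m by (simp add: nt_mod_iff)
    fix y assume "0 < y \<and> (3 ^ y * e) mod ?n = e mod ?n"
    hence "0 < y" "?n dvd e * (3 ^ y - 1)" using nt_mod_iff by blast+
    thus "m \<le> y" using key by (meson not_less)
  qed
  have cop3: "coprime (3::nat) ?n"
  proof (rule prime_imp_coprime)
    show "prime (3::nat)" by simp
    show "\<not> 3 dvd ?n"
    proof
      assume "3 dvd ?n"
      moreover have "(3::nat) dvd 3 ^ m" using m by (simp add: dvd_power)
      ultimately have "(3::nat) dvd 3 ^ m - ?n" by (rule dvd_diff_nat[rotated])
      moreover have "(3::nat) ^ m - ?n = 1" using n2 by simp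
      ultimately show False by simp
    qed
  qed
  have m1: "((3::nat) ^ m) mod ?n = 1 mod ?n"
  proof -
    have a: "((3::nat) ^ m - 1 + 1) mod ?n = 1 mod ?n" by (rule mod_add_self1)
    have b: "(3::nat) ^ m - 1 + 1 = 3 ^ m" using n2 by simp
    show ?thesis using a unfolding b .
  qed
  have per: "(3 ^ i * e) mod ?n = (3 ^ (i mod m) * e) mod ?n" for i
  proof -
    have "(3::nat) ^ i = 3 ^ (m * (i div m) + i mod m)" by (simp add: mult_div_mod_eq)
    also have "\<dots> = (3 ^ m) ^ (i div m) * 3 ^ (i mod m)" by (simp only: power_add power_mult)
    finally have i: "(3::nat) ^ i = (3 ^ m) ^ (i div m) * 3 ^ (i mod m)" .
    have "((3::nat) ^ m) ^ (i div m) mod ?n = ((3 ^ m) mod ?n) ^ (i div m) mod ?n"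
      by (rule power_mod[symmetric])
    also have "\<dots> = (1 mod ?n) ^ (i div m) mod ?n" by (simp only: m1)
    also have "\<dots> = 1 mod ?n" by (simp only: power_mod power_one)
    finally have p: "((3::nat) ^ m) ^ (i div m) mod ?n = 1 mod ?n" .
    have "(3 ^ i * e) mod ?n = (((3::nat) ^ m) ^ (i div m) * (3 ^ (i mod m) * e)) mod ?n"
      unfolding i by (simp only: mult.assoc)
    also have "\<dots> = ((((3::nat) ^ m) ^ (i div m) mod ?n) * (3 ^ (i mod m) * e)) mod ?n"
      by (rule mod_mult_left_eq[symmetric])
    also have "\<dots> = ((1 mod ?n) * (3 ^ (i mod m) * e)) mod ?n" by (simp only: p)
    also have "\<dots> = (3 ^ (i mod m) * e) mod ?n" by (simp only: mod_mult_left_eq mult.left_neutral)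
    finally show ?thesis .
  qed
  have coset: "cyc_coset ?n e = (\<lambda>i. (3 ^ i * e) mod ?n) ` {..<m}"
  proof
    show "cyc_coset ?n e \<subseteq> (\<lambda>i. (3 ^ i * e) mod ?n) ` {..<m}"
    proof
      fix x assume "x \<in> cyc_coset ?n e"
      then obtain i where "x = (3 ^ i * e) mod ?n" unfolding cyc_coset_def by auto
      hence "x = (3 ^ (i mod m) * e) mod ?n" using per by simp
      moreover have "i mod m < m" using m by simp
      ultimately show "x \<in> (\<lambda>i. (3 ^ i * e) mod ?n) ` {..<m}" by blast
    qed
    show "(\<lambda>i. (3 ^ i * e) mod ?n) ` {..<m} \<subseteq> cyc_coset ?n e"
      unfolding cyc_coset_def by blast
  qed
  have inj: "inj_on (\<lambda>i. (3 ^ i * e) mod ?n) {..<m}"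
  proof (rule inj_onI)
    have A: "i = j" if ij: "i \<le> j" "j < m" "(3 ^ i * e) mod ?n = (3 ^ j * e) mod ?n" for i j
    proof (rule ccontr)
      assume "i \<noteq> j"
      hence l: "0 < j - i" "j - i < m" using ij by auto
      have le: "(3::nat) ^ i * e \<le> 3 ^ j * e"
        using ij(1) by (intro mult_le_mono1 power_increasing) simp_all
      have "(3 ^ j * e) mod ?n = (3 ^ i * e) mod ?n" using ij(3) by (rule sym)
      hence "?n dvd 3 ^ j * e - 3 ^ i * e" using mod_eq_dvd_iff_nat[OF le, of ?n] by blast
      moreover have "3 ^ j * e - 3 ^ i * e = 3 ^ i * (e * (3 ^ (j - i) - 1))"
        using ij by (simp add: algebra_simps diff_mult_distrib2 flip: power_add)
      ultimately have "?n dvd 3 ^ i * (e * (3 ^ (j - i) - 1))" by simp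
      moreover have "coprime ?n (3 ^ i)" using cop3 by (simp add: coprime_commute)
      ultimately have "?n dvd e * (3 ^ (j - i) - 1)" using coprime_dvd_mult_right_iff by blast
      thus False using key l by blast
    qed
    fix i j assume "i \<in> {..<m}" "j \<in> {..<m}" "(3 ^ i * e) mod ?n = (3 ^ j * e) mod ?n"
    thus "i = j" using A[of i j] A[of j i] by (cases "i \<le> j") auto
  qed
  have cc: "card (cyc_coset ?n e) = m" using coset inj by (simp add: card_image)
  have notin: "e \<notin> cyc_coset ?n 1"
  proof
    assume "e \<in> cyc_coset ?n 1"
    then obtain i where "e = (3 ^ i * 1) mod ?n" unfolding cyc_coset_def by auto
    hence "gcd e ?n = gcd ?n (3 ^ i mod ?n)" by (simp add: gcd.commute)
    also have "\<dots> = gcd (3 ^ i) ?n" by (rule gcd_red_nat[symmetric])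
    also have "\<dots> = 1" using cop3 by (simp add: coprime_iff_gcd_eq_1[symmetric])
    finally show False using g by simp
  qed
  show ?thesis using ev g ell cc notin by simp
qed

end
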